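(* In the setting of the context, assume (G1), (G2') and ($\overline G{}_3'$), and let $\tilde\rho$ be a metric on $X$ inducing its topology, with constants $\gamma\ge1$, $C\ge1$ such that $C^{-1}\tilde\rho(x,y)^{-\gamma}\le\tilde G(x,y)\le C\tilde\rho(x,y)^{-\gamma}$ for all $x,y$. Then there exists $\tilde c_2\ge1$ such that $$\widetilde{\operatorname{cap}}\,\tilde U(x,r)\ \ge\ \tilde c_2^{-1}\,r^{\gamma}\qquad\text{for all }x\in X_0,\ 0<r<\tilde R_0(x).$$
   Context: $(X,\rho)$ separable metric space, $X_0\subsetneq X$ open. $\mathcal M(X)$ finite Borel measures (extended to universally measurable sets), $\|\mu\|=\mu(X)$. For every open $U\subseteq X$ and $x\in X$ a measure $\mu_x^U\in\mathcal M(X)$ is given such that for all open $U,V$ and $x$: $\mu_x^U(U)=0$, $\|\mu_x^U\|\le1$, $\mu_x^U=\varepsilon_x$ (Dirac) if $x\notin U$; $y\mapsto\mu_y^U(E)$ universally measurable for Borel $E$; $\mu_x^U=\int\mu_y^U\,d\mu_x^V(y)$ if $V\subseteq U$. For closed $A$, $\varepsilon_x^A:=\mu_x^{X\setminus A}$. $\mathcal U(X_0)$: open $U$ with $\overline U\subseteq X_0$. $G\colon X\times X\to(0,\infty]$ Borel, $G\nu(x)=\int G(x,y)d\nu(y)$; $V(x,s):=\{y:G(y,x)^{-1}<s\}$; $S_0(x):=\sup\{s>0:\overline{V(x,s)}\subseteq X_0\}$. $\tilde U(x,r):=\{y:\tilde\rho(x,y)<r\}$, $\tilde R_0(x):=\sup\{r>0:\overline{\tilde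 U(x,r)}\subseteq X_0\}$. For universally measurable $A$, $\widetilde{\operatorname{cap}}A:=\sup\{\|\mu\|:\mu\in\mathcal M(X),\ \mu(X\setminus A)=0,\ \int\tilde G(\cdot,y)\,d\mu(y)\le1\}$. (G1): there is $c_1\ge1$ such that for all $U\in\mathcal U(X_0)$, $x\in U$, $\delta>0$, closed $A\subseteq U$ there are a closed neighborhood $B\subseteq U$ of $A$ and a measure $\nu$ carried by $B$ with $\|\varepsilon_x^B\|-\delta<c_1\|\varepsilon_x^A\|$ and $\|\varepsilon_y^A\|\le G\nu(y)\le c_1\|\varepsilon_y^B\|$ for all $y$. (G2'): for every $x$, $G(x,x)=\lim_{y\to x}G(y,x)=\infty$; there is a Borel $w$ with $0<w\le1$ and $\int w\,d\mu_x^U\le w(x)$ for all open $U$, $x$; there is $\tilde c>1$ with $\tilde G(x,z)\wedge\tilde G(y,z)\le\tilde c\tilde G(x,y)$ for all $x,y,z$, where $\tilde G(x,y):=G(x,y)/(w(x)w(y))$; $\lambda:=\inf w(X_0)>0$; for each $x$ and neighborhood $V$ of $x$, $G(\cdot,x)/w$ is bounded on $X\setminus V$. ($\overline G{}_3'$): there is $c_3\ge1$ with $\|\varepsilon_y^{\overline{V(x,s)}}\|\ge c_3^{-1}sG(y,x)$ for all $x\in X_0$, $0<s<S_0(x)$, $y\in X\setminus V(x,s)$. *)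

theory Defs
  imports "HOL-Probability.Probability"
begin

text \<open>X is the whole (separable metric) type 'a; measures are finite Borel measures on it.\<close>

definition fin_borel :: "'a::topological_space measure \<Rightarrow> bool" where
  "fin_borel M \<longleftrightarrow> sets M = sets borel \<and> finite_measure M"

definition mnorm :: "'a measure \<Rightarrow> ennreal" where
  "mnorm M = emeasure M (space M)"

definition univ_meas_fun :: "('a::topological_space \<Rightarrow> ennreal) \<Rightarrow> bool" where
  "univ_meas_fun f \<longleftrightarrow> (\<forall>M. fin_borel M \<longrightarrow> f \<in> borel_measurable (completion M))"

definition eps :: "('a set \<Rightarrow> 'a \<Rightarrow> 'a measure) \<Rightarrow> 'a set \<Rightarrow> 'a \<Rightarrow> 'a measure" where
  "eps mu A x = mu (- A) x"

definition Gpot :: "('a \<Rightarrow> 'a \<Rightarrow> ennreal) \<Rightarrow> 'a measure \<Rightarrow> 'a \<Rightarrow> ennreal" where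
  "Gpot G \<nu> x = (\<integral>\<^sup>+ y. G x y \<partial>\<nu>)"

definition Gt :: "('a \<Rightarrow> 'a \<Rightarrow> ennreal) \<Rightarrow> ('a \<Rightarrow> real) \<Rightarrow> 'a \<Rightarrow> 'a \<Rightarrow> ennreal" where
  "Gt G w x y = G x y / ennreal (w x * w y)"

definition Vset :: "('a \<Rightarrow> 'a \<Rightarrow> ennreal) \<Rightarrow> 'a \<Rightarrow> real \<Rightarrow> 'a set" where
  "Vset G x s = {y. inverse (G y x) < ennreal s}"

definition S0 :: "'a::topological_space set \<Rightarrow> ('a \<Rightarrow> 'a \<Rightarrow> ennreal) \<Rightarrow> 'a \<Rightarrow> ereal" where
  "S0 X0 G x = Sup {ereal s | s. s > 0 \<and> closure (Vset G x s) \<subseteq> X0}"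

definition Ut :: "('a \<Rightarrow> 'a \<Rightarrow> real) \<Rightarrow> 'a \<Rightarrow> real \<Rightarrow> 'a set" where
  "Ut rt x r = {y. rt x y < r}"

definition R0t :: "'a::topological_space set \<Rightarrow> ('a \<Rightarrow> 'a \<Rightarrow> real) \<Rightarrow> 'a \<Rightarrow> ereal" where
  "R0t X0 rt x = Sup {ereal r | r. r > 0 \<and> closure (Ut rt x r) \<subseteq> X0}"

definition capt :: "('a::topological_space \<Rightarrow> 'a \<Rightarrow> ennreal) \<Rightarrow> ('a \<Rightarrow> real) \<Rightarrow> 'a set \<Rightarrow> ennreal" where
  "capt G w A = Sup {mnorm M | M. fin_borel M \<and> emeasure (completion M) (- A) = 0 \<and>
                        (\<forall>x. (\<integral>\<^sup>+ y. Gt G w x y \<partial>M) \<le> 1)}"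

definition rpow_neg :: "real \<Rightarrow> real \<Rightarrow> ennreal" where
  "rpow_neg r g = (if r = 0 then \<infinity> else ennreal (r powr (- g)))"

definition std_setting :: "'a::topological_space set \<Rightarrow> ('a set \<Rightarrow> 'a \<Rightarrow> 'a measure) \<Rightarrow> ('a \<Rightarrow> 'a \<Rightarrow> ennreal) \<Rightarrow> bool" where
  "std_setting X0 mu G \<longleftrightarrow>
     open X0 \<and> X0 \<noteq> UNIV \<and>
     (\<forall>U x. open U \<longrightarrow>
        fin_borel (mu U x) \<and> emeasure (mu U x) U = 0 \<and> mnorm (mu U x) \<le> 1 \<and>
        (x \<notin> U \<longrightarrow> mu U x = return borel x) \<and>
        (\<forall>E \<in> sets borel. univ_meas_fun (\<lambda>y. emeasure (mu U y) E)) \<and>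
        (\<forall>V. open V \<and> V \<subseteq> U \<longrightarrow> (\<forall>E \<in> sets borel.
            emeasure (mu U x) E = (\<integral>\<^sup>+ y. emeasure (mu U y) E \<partial>(completion (mu V x)))))) \<and>
     (\<forall>x y. 0 < G x y) \<and> case_prod G \<in> borel_measurable borel"

definition cond_G1 :: "'a::topological_space set \<Rightarrow> ('a set \<Rightarrow> 'a \<Rightarrow> 'a measure) \<Rightarrow> ('a \<Rightarrow> 'a \<Rightarrow> ennreal) \<Rightarrow> bool" where
  "cond_G1 X0 mu G \<longleftrightarrow> (\<exists>c1::real. c1 \<ge> 1 \<and>
     (\<forall>U x \<delta> A. open U \<and> closure U \<subseteq> X0 \<and> x \<in> U \<and> \<delta> > 0 \<and> closed A \<and> A \<subseteq> U \<longrightarrow>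
        (\<exists>B \<nu>. closed B \<and> A \<subseteq> interior B \<and> B \<subseteq> U \<and> fin_borel \<nu> \<and> emeasure \<nu> (- B) = 0 \<and>
           mnorm (eps mu B x) < ennreal c1 * mnorm (eps mu A x) + ennreal \<delta> \<and>
           (\<forall>y. mnorm (eps mu A y) \<le> Gpot G \<nu> y \<and> Gpot G \<nu> y \<le> ennreal c1 * mnorm (eps mu B y)))))"

definition cond_G2' :: "'a::topological_space set \<Rightarrow> ('a set \<Rightarrow> 'a \<Rightarrow> 'a measure) \<Rightarrow> ('a \<Rightarrow> 'a \<Rightarrow> ennreal) \<Rightarrow> ('a \<Rightarrow> real) \<Rightarrow> bool" where
  "cond_G2' X0 mu G w \<longleftrightarrow>
     (\<forall>x. G x x = \<infinity> \<and> ((\<lambda>y. G y x) \<longlongrightarrow> \<infinity>) (at x)) \<and>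
     w \<in> borel_measurable borel \<and> (\<forall>x. 0 < w x \<and> w x \<le> 1) \<and>
     (\<forall>U x. open U \<longrightarrow> (\<integral>\<^sup>+ y. ennreal (w y) \<partial>(mu U x)) \<le> ennreal (w x)) \<and>
     (\<exists>ct::real. ct > 1 \<and> (\<forall>x y z. min (Gt G w x z) (Gt G w y z) \<le> ennreal ct * Gt G w x y)) \<and>
     (\<exists>lam::real. lam > 0 \<and> (\<forall>x \<in> X0. lam \<le> w x)) \<and>
     (\<forall>x V. open V \<and> x \<in> V \<longrightarrow> (\<exists>M::real. \<forall>y \<in> - V. G y x / ennreal (w y) \<le> ennreal M))"

definition cond_G3' :: "'a::topological_space set \<Rightarrow> ('a set \<Rightarrow> 'a \<Rightarrow> 'a measure) \<Rightarrow> ('a \<Rightarrow> 'a \<Rightarrow> ennreal) \<Rightarrow> bool" where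
  "cond_G3' X0 mu G \<longleftrightarrow> (\<exists>c3::real. c3 \<ge> 1 \<and>
     (\<forall>x s y. x \<in> X0 \<and> 0 < s \<and> ereal s < S0 X0 G x \<and> y \<notin> Vset G x s \<longrightarrow>
        ennreal (s / c3) * G y x \<le> mnorm (eps mu (closure (Vset G x s)) y)))"

end

theory Submission
  imports Defs
begin

lemma Gt_mult:
  assumes "0 < p"
  shows "G / ennreal p * ennreal p = (G::ennreal)"
  using assms by (simp add: ennreal_divide_times divide_ennreal)

lemma Gt_eq:
  assumes "0 < p"
  shows "G / ennreal p = (G::ennreal) * ennreal (1 / p)"
  using assms by (simp add: divide_ennreal_def inverse_ennreal inverse_eq_divide)

lemma inv_ge:
  assumes "g \<le> ennreal (1 / s)" "0 < s"
  shows "ennreal s \<le> inverse g"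
proof (cases "g = 0")
  case True then show ?thesis by simp
next
  case False
  obtain a where a: "g = ennreal a" "0 \<le> a"
    using assms(1) by (cases g) (auto simp: top_unique)
  with assms have "a \<le> 1/s" by (simp add: ennreal_le_iff)
  have "a > 0" using False a by auto
  then have "s \<le> inverse a" using a assms by (simp add: field_simps)
  then show ?thesis using a \<open>a > 0\<close> by (simp add: inverse_ennreal)
qed


lemma real_aux1:
  fixes s c3 C Dg T wy wx lam nS :: real
  assumes h: "s / c3 * (1 / C * Dg * (wy * wx)) \<le> C * (Dg * T) * wy * nS"
    and "0 < Dg" "0 < wy" "0 < s" "0 < c3" "0 < C" "0 < T" "lam \<le> wx" "0 < lam"
  shows "s * lam / (c3 * C^2 * T) \<le> nS"
proof -
  have "(s / c3 * (1 / C) * wx) * (Dg * wy) \<le> (C * T * nS) * (Dg * wy)"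
    using h by (simp add: algebra_simps)
  then have h2: "s / c3 * (1 / C) * wx \<le> C * T * nS"
    by (rule mult_right_le_imp_le) (use assms in auto)
  have "s * lam / (c3 * C^2 * T) \<le> s * wx / (c3 * C^2 * T)"
    using assms by (intro divide_right_mono mult_left_mono) auto
  also have "\<dots> = (s / c3 * (1 / C) * wx) / (C * T)"
    using assms by (simp add: field_simps power2_eq_square)
  also have "\<dots> \<le> (C * T * nS) / (C * T)"
    using h2 assms by (intro divide_right_mono) auto
  also have "\<dots> = nS" using assms by simp
  finally show ?thesis .
qed

lemma real_aux2:
  fixes R E8 T lam c1 c3 C c2 nS :: real
  assumes "R / (E8 * C) * lam / (c3 * C^2 * T) \<le> nS"
    and "c2 \<ge> c1 * c3 * C ^ 3 * (E8 * T) / lam ^ 3" "c2 \<ge> 1"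
    and "0 < R" "0 < E8" "0 < T" "0 < lam" "0 < c1" "0 < c3" "0 < C"
  shows "R / c2 \<le> lam / (c1 / lam) * nS"
proof -
  define Q where "Q = c1 * c3 * C ^ 3 * (E8 * T) / lam ^ 3"
  have Q0: "0 < Q" using assms by (simp add: Q_def)
  have "R / c2 \<le> R / Q" using assms Q0 by (intro divide_left_mono) (auto simp: Q_def)
  also have "R / Q = lam / (c1 / lam) * (R / (E8 * C) * lam / (c3 * C^2 * T))"
    using assms by (simp add: Q_def field_simps power2_eq_square power3_eq_cube)
  also have "\<dots> \<le> lam / (c1 / lam) * nS"
    using assms by (intro mult_left_mono) auto
  finally show ?thesis .
qed

theorem corollary7p5:
  fixes X0 :: "'a::{metric_space, second_countable_topology} set"
    and mu :: "'a set \<Rightarrow> 'a \<Rightarrow> 'a measure"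
    and G :: "'a \<Rightarrow> 'a \<Rightarrow> ennreal"
    and w :: "'a \<Rightarrow> real"
    and rt :: "'a \<Rightarrow> 'a \<Rightarrow> real"
    and gam C :: real
  assumes "std_setting X0 mu G"
    and "cond_G1 X0 mu G"
    and "cond_G2' X0 mu G w"
    and "cond_G3' X0 mu G"
    and "Metric_space (UNIV::'a set) rt"
    and "Metric_space.mtopology (UNIV::'a set) rt = euclidean"
    and "gam \<ge> 1" and "C \<ge> 1"
    and "\<forall>x y. ennreal (1 / C) * rpow_neg (rt x y) gam \<le> Gt G w x y \<and>
               Gt G w x y \<le> ennreal C * rpow_neg (rt x y) gam"
  shows "\<exists>c2::real. c2 \<ge> 1 \<and> (\<forall>x \<in> X0. \<forall>r. 0 < r \<and> ereal r < R0t X0 rt x \<longrightarrow>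
           ennreal (r powr gam / c2) \<le> capt G w (Ut rt x r))"
proof -
  interpret m: Metric_space UNIV rt by fact
  have X0ne: "X0 \<noteq> UNIV" using assms(1) unfolding std_setting_def by blast
  have muprops: "\<And>U x. open U \<Longrightarrow> fin_borel (mu U x) \<and> emeasure (mu U x) U = 0"
    using assms(1) unfolding std_setting_def by blast
  have Gmeas0: "case_prod G \<in> borel_measurable borel"
    using assms(1) unfolding std_setting_def by blast
  from assms(2) obtain c1 :: real where c1: "c1 \<ge> 1" and G1:
    "\<forall>U x \<delta> A. open U \<and> closure U \<subseteq> X0 \<and> x \<in> U \<and> \<delta> > 0 \<and> closed A \<and> A \<subseteq> U \<longrightarrow>
        (\<exists>B \<nu>. closed B \<and> A \<subseteq> interior B \<and> B \<subseteq> U \<and> fin_borel \<nu> \<and> emeasure \<nu> (- B) = 0 \<and>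
           mnorm (eps mu B x) < ennreal c1 * mnorm (eps mu A x) + ennreal \<delta> \<and>
           (\<forall>y. mnorm (eps mu A y) \<le> Gpot G \<nu> y \<and> Gpot G \<nu> y \<le> ennreal c1 * mnorm (eps mu B y)))"
    using assms(2) unfolding cond_G1_def by (elim exE conjE) (erule (1) that)
  have wb: "\<forall>x. 0 < w x \<and> w x \<le> 1" using assms(3) unfolding cond_G2'_def by (elim conjE) assumption
  have wpos: "\<And>x. 0 < w x" and wle1: "\<And>x. w x \<le> 1" using wb by auto
  have wmeas: "w \<in> borel_measurable borel" using assms(3) unfolding cond_G2'_def by (elim conjE) assumption
  have superm0: "\<forall>U x. open U \<longrightarrow> (\<integral>\<^sup>+ y. ennreal (w y) \<partial>(mu U x)) \<le> ennreal (w x)"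
    using assms(3) unfolding cond_G2'_def by (elim conjE) assumption
  then have superm: "\<And>U x. open U \<Longrightarrow> (\<integral>\<^sup>+ y. ennreal (w y) \<partial>(mu U x)) \<le> ennreal (w x)" by blast
  have lam0: "\<exists>lam::real. lam > 0 \<and> (\<forall>x \<in> X0. lam \<le> w x)"
    using assms(3) unfolding cond_G2'_def by (elim conjE) assumption
  then obtain lam :: real where lam: "lam > 0" "\<And>x. x \<in> X0 \<Longrightarrow> lam \<le> w x" by blast
  from assms(4) obtain c3 :: real where c3: "c3 \<ge> 1" and G3:
    "\<forall>x s y. x \<in> X0 \<and> 0 < s \<and> ereal s < S0 X0 G x \<and> y \<notin> Vset G x s \<longrightarrow>
        ennreal (s / c3) * G y x \<le> mnorm (eps mu (closure (Vset G x s)) y)"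
    using assms(4) unfolding cond_G3'_def by (elim exE conjE) (erule (1) that)
  have Gmeas: "\<And>y. (\<lambda>z. G y z) \<in> borel_measurable borel"
  proof -
    fix y :: 'a
    have "(\<lambda>z. (y, z)) \<in> borel_measurable borel"
      by (intro borel_measurable_continuous_onI continuous_intros)
    from measurable_compose[of "\<lambda>z. (y, z)" borel borel "case_prod G" borel, OF this Gmeas0]
    show "(\<lambda>z. G y z) \<in> borel_measurable borel" by simp
  qed
  have Ut_open: "\<And>x \<rho>. open (Ut rt x \<rho>)"
  proof -
    fix x :: 'a and \<rho> :: real
    have "Ut rt x \<rho> = m.mball x \<rho>" unfolding Ut_def m.mball_def by auto
    moreover have "openin m.mtopology (m.mball x \<rho>)" by simp
    ultimately show "open (Ut rt x \<rho>)" using assms(6) by simp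
  qed
  have cb_closed: "\<And>x \<rho>. closed {z. rt x z \<le> \<rho>}"
  proof -
    fix x :: 'a and \<rho> :: real
    have "{z. rt x z \<le> \<rho>} = m.mcball x \<rho>" unfolding m.mcball_def by auto
    moreover have "closedin m.mtopology (m.mcball x \<rho>)" by simp
    ultimately show "closed {z. rt x z \<le> \<rho>}" using assms(6) by simp
  qed
  have clos: "\<And>x \<rho>. closure (Ut rt x \<rho>) \<subseteq> {z. rt x z \<le> \<rho>}"
    by (rule closure_minimal) (auto simp: Ut_def cb_closed)
  have wab: "\<And>a b. 0 < w a * w b" using wpos by (simp add: mult_pos_pos)
  have Gt_eq': "\<And>a b. Gt G w a b = G a b * ennreal (1 / (w a * w b))"
    unfolding Gt_def by (rule Gt_eq[OF wab])
  have G_eq: "\<And>a b. G a b = Gt G w a b * ennreal (w a * w b)"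
    unfolding Gt_def by (rule Gt_mult[OF wab, symmetric])
  have Gup: "\<And>a b. a \<noteq> b \<Longrightarrow> G a b \<le> ennreal (C * rt a b powr (- gam) * (w a * w b))"
  proof -
    fix a b :: 'a assume "a \<noteq> b"
    then have "rt a b \<noteq> 0" by simp
    have "G a b = Gt G w a b * ennreal (w a * w b)" by (rule G_eq)
    also have "\<dots> \<le> ennreal C * rpow_neg (rt a b) gam * ennreal (w a * w b)"
      using assms(9) by (intro mult_right_mono) auto
    also have "\<dots> = ennreal (C * rt a b powr (- gam) * (w a * w b))"
      using \<open>rt a b \<noteq> 0\<close> assms(8) wab[of a b]
      by (simp add: rpow_neg_def less_imp_le flip: ennreal_mult)
    finally show "G a b \<le> ennreal (C * rt a b powr (- gam) * (w a * w b))" .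
  qed
  have Glo: "\<And>a b. a \<noteq> b \<Longrightarrow> ennreal (1 / C * rt a b powr (- gam) * (w a * w b)) \<le> G a b"
  proof -
    fix a b :: 'a assume "a \<noteq> b"
    then have "rt a b \<noteq> 0" by simp
    have "ennreal (1 / C * rt a b powr (- gam) * (w a * w b)) = ennreal (1/C) * rpow_neg (rt a b) gam * ennreal (w a * w b)"
      using \<open>rt a b \<noteq> 0\<close> assms(8) wab[of a b]
      by (simp add: rpow_neg_def less_imp_le flip: ennreal_mult)
    also have "\<dots> \<le> Gt G w a b * ennreal (w a * w b)"
      using assms(9) by (intro mult_right_mono) auto
    also have "\<dots> = G a b" by (rule G_eq[symmetric])
    finally show "ennreal (1 / C * rt a b powr (- gam) * (w a * w b)) \<le> G a b" .
  qed
  have Vsub: "\<And>x \<rho>. \<rho> > 0 \<Longrightarrow> Vset G x (\<rho> powr gam / C) \<subseteq> Ut rt x \<rho>"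
  proof -
    fix x :: 'a and \<rho> :: real
    assume \<rho>: "\<rho> > 0"
    show "Vset G x (\<rho> powr gam / C) \<subseteq> Ut rt x \<rho>"
    proof
      fix y assume y: "y \<in> Vset G x (\<rho> powr gam / C)"
      show "y \<in> Ut rt x \<rho>"
      proof (rule ccontr)
        assume "y \<notin> Ut rt x \<rho>"
        then have ge: "\<rho> \<le> rt x y" by (simp add: Ut_def)
        then have yx: "y \<noteq> x" using \<rho> by auto
        have ge': "\<rho> \<le> rt y x" using ge m.commute[of x y] by simp
        have "G y x \<le> ennreal (C * rt y x powr (- gam) * (w y * w x))" using Gup[OF yx] .
        also have "\<dots> \<le> ennreal (1 / (\<rho> powr gam / C))"
        proof (rule ennreal_leI)
          have p: "rt y x powr (- gam) \<le> \<rho> powr (- gam)"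
            by (rule powr_mono2') (use ge' \<rho> assms(7) in auto)
          have ww: "w y * w x \<le> 1" using wpos wle1 by (simp add: mult_le_one less_imp_le)
          have "C * rt y x powr (- gam) * (w y * w x) \<le> C * \<rho> powr (- gam) * 1"
            using p ww assms(8) wab[of y x] by (intro mult_mono) auto
          also have "\<dots> = 1 / (\<rho> powr gam / C)" by (simp add: powr_minus field_simps)
          finally show "C * rt y x powr (- gam) * (w y * w x) \<le> 1 / (\<rho> powr gam / C)" .
        qed
        finally have "ennreal (\<rho> powr gam / C) \<le> inverse (G y x)"
          by (rule inv_ge) (use \<rho> assms(8) in simp)
        with y show False by (simp add: Vset_def not_less[symmetric])
      qed
    qed
  qed
  define c2 where "c2 = max 1 (c1 * c3 * C ^ 3 * 16 powr gam / lam ^ 3)"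
  show ?thesis
  proof (intro exI conjI ballI allI impI)
    show "c2 \<ge> 1" unfolding c2_def by simp
    fix x r assume x: "x \<in> X0" and r: "0 < r \<and> ereal r < R0t X0 rt x"
    have r0: "0 < r" using r by auto
    obtain r' where r': "r < r'" "closure (Ut rt x r') \<subseteq> X0"
      using r unfolding R0t_def less_Sup_iff by auto
    have "Ut rt x r \<subseteq> Ut rt x r'" using r' by (auto simp: Ut_def)
    then have UrX0: "Ut rt x r \<subseteq> X0" using r' closure_subset[of "Ut rt x r'"] by blast
    define s where "s = (r/8) powr gam / C"
    define s2 where "s2 = (r/4) powr gam / C"
    have s0: "0 < s" using r0 assms(8) by (simp add: s_def)
    have ss2: "s < s2" unfolding s_def s2_def
      using r0 assms(7,8) by (intro divide_strict_right_mono powr_less_mono2) auto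
    define A where "A = closure (Vset G x s)"
    define U where "U = Ut rt x (r/2)"
    have VsU8: "Vset G x s \<subseteq> Ut rt x (r/8)" unfolding s_def by (rule Vsub) (use r0 in simp)
    have Asub: "A \<subseteq> {z. rt x z \<le> r/8}" unfolding A_def using closure_mono[OF VsU8] clos by blast
    have AU: "A \<subseteq> U" using Asub r0 by (auto simp: U_def Ut_def)
    have closU: "closure U \<subseteq> X0" using clos[of x "r/2"] UrX0 r0 by (force simp: U_def Ut_def)
    have xU: "x \<in> U" using r0 by (simp add: U_def Ut_def)
    have clA: "closed A" by (simp add: A_def)
    have "\<exists>B \<nu>. closed B \<and> A \<subseteq> interior B \<and> B \<subseteq> U \<and> fin_borel \<nu> \<and> emeasure \<nu> (- B) = 0 \<and>
           mnorm (eps mu B x) < ennreal c1 * mnorm (eps mu A x) + ennreal 1 \<and>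
           (\<forall>y. mnorm (eps mu A y) \<le> Gpot G \<nu> y \<and> Gpot G \<nu> y \<le> ennreal c1 * mnorm (eps mu B y))"
      by (rule G1[rule_format]) (use Ut_open closU xU clA AU in \<open>simp add: U_def\<close>)
    then obtain B \<nu> where h: "closed B \<and> A \<subseteq> interior B \<and> B \<subseteq> U \<and> fin_borel \<nu> \<and> emeasure \<nu> (- B) = 0 \<and>
           mnorm (eps mu B x) < ennreal c1 * mnorm (eps mu A x) + ennreal 1 \<and>
           (\<forall>y. mnorm (eps mu A y) \<le> Gpot G \<nu> y \<and> Gpot G \<nu> y \<le> ennreal c1 * mnorm (eps mu B y))"
      by (elim exE) (erule that)
    have clB: "closed B" using h by blast
    have BU: "B \<subseteq> U" using h by blast
    have nufb: "fin_borel \<nu>" using h by blast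
    have nuB: "emeasure \<nu> (- B) = 0" using h by blast
    have hyp0: "\<forall>y. mnorm (eps mu A y) \<le> Gpot G \<nu> y \<and> Gpot G \<nu> y \<le> ennreal c1 * mnorm (eps mu B y)"
      using h by blast
    have hyp1: "\<And>y. mnorm (eps mu A y) \<le> Gpot G \<nu> y" and hyp2: "\<And>y. Gpot G \<nu> y \<le> ennreal c1 * mnorm (eps mu B y)"
      using hyp0 by auto
    have BX0: "B \<subseteq> X0" using BU closU closure_subset[of U] by blast
    have sets_nu: "sets \<nu> = sets borel" and fin: "finite_measure \<nu>" using nufb by (auto simp: fin_borel_def)
    have space_nu: "space \<nu> = UNIV" using sets_eq_imp_space_eq[OF sets_nu] by simp
    have bm_nu: "borel_measurable \<nu> = borel_measurable borel"
      by (rule measurable_cong_sets) (simp_all add: sets_nu)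
    have AEB: "AE z in \<nu>. z \<in> B"
      by (rule AE_I[of _ _ "- B"]) (use nuB clB sets_nu in \<open>auto\<close>)
    obtain y where y: "y \<notin> X0" using X0ne by auto
    define D where "D = rt x y"
    have Dr: "r \<le> D" using y UrX0 by (force simp: D_def Ut_def)
    have yx: "y \<noteq> x" using y x by auto
    have S0: "ereal s < S0 X0 G x"
    proof -
      have "Vset G x s2 \<subseteq> Ut rt x (r/4)" unfolding s2_def by (rule Vsub) (use r0 in simp)
      then have "closure (Vset G x s2) \<subseteq> {z. rt x z \<le> r/4}"
        using closure_mono clos[of x "r/4"] by blast
      also have "\<dots> \<subseteq> X0" using UrX0 r0 by (force simp: Ut_def)
      finally have "ereal s2 \<in> {ereal s | s. s > 0 \<and> closure (Vset G x s) \<subseteq> X0}" using s0 ss2 by auto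
      then have "ereal s2 \<le> S0 X0 G x" unfolding S0_def by (rule Sup_upper)
      moreover have "ereal s < ereal s2" using ss2 by simp
      ultimately show ?thesis by (rule order.strict_trans2[rotated])
    qed
    have "Ut rt x (r/8) \<subseteq> Ut rt x r" using r0 by (auto simp: Ut_def)
    then have yV: "y \<notin> Vset G x s" using VsU8 UrX0 y by blast
    have e1: "ennreal (s / c3) * G y x \<le> mnorm (eps mu A y)"
      unfolding A_def by (rule G3[rule_format]) (use x s0 S0 yV in auto)
    have e2: "Gpot G \<nu> y \<le> (\<integral>\<^sup>+ z. ennreal (C * (D/2) powr (-gam) * w y) \<partial>\<nu>)"
      unfolding Gpot_def
    proof (rule nn_integral_mono_AE)
      show "AE z in \<nu>. G y z \<le> ennreal (C * (D/2) powr (-gam) * w y)"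
        using AEB
      proof eventually_elim
        fix z assume "z \<in> B"
        then have xz: "rt x z < r/2" using BU by (auto simp: U_def Ut_def)
        have "D \<le> rt x z + rt z y" unfolding D_def by (rule m.triangle) auto
        then have dz: "D/2 \<le> rt y z" using xz Dr m.commute[of z y] by linarith
        have yz: "y \<noteq> z" using dz Dr r0 by auto
        have "G y z \<le> ennreal (C * rt y z powr (- gam) * (w y * w z))" using Gup[OF yz] .
        also have "\<dots> \<le> ennreal (C * (D/2) powr (-gam) * w y)"
        proof (rule ennreal_leI)
          have p: "rt y z powr (- gam) \<le> (D/2) powr (- gam)"
            by (rule powr_mono2') (use dz Dr r0 assms(7) in auto)
          have ww: "w y * w z \<le> w y" using wpos[of y] wle1[of z] by (simp add: mult_left_le)
          show "C * rt y z powr (- gam) * (w y * w z) \<le> C * (D/2) powr (-gam) * w y"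
            using p ww assms(8) wab[of y z] by (intro mult_mono) auto
        qed
        finally show "G y z \<le> ennreal (C * (D/2) powr (-gam) * w y)" .
      qed
    qed
    define nS where "nS = measure \<nu> (space \<nu>)"
    have nS0: "0 \<le> nS" by (simp add: nS_def)
    have nS_eq: "emeasure \<nu> (space \<nu>) = ennreal nS"
      using fin by (simp add: finite_measure.emeasure_eq_measure nS_def)
    have e3: "(\<integral>\<^sup>+ z. ennreal (C * (D/2) powr (-gam) * w y) \<partial>\<nu>) = ennreal (C * (D/2) powr (-gam) * w y * nS)"
      using nS_eq nS0 wpos[of y] assms(8) by (simp add: nn_integral_const ennreal_mult)
    have Dpos: "0 < D" using Dr r0 by simp
    have e0: "ennreal (s / c3 * (1 / C * D powr (- gam) * (w y * w x))) \<le> ennreal (s / c3) * G y x"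
    proof -
      have "ennreal (s / c3 * (1 / C * D powr (- gam) * (w y * w x))) =
            ennreal (s / c3) * ennreal (1 / C * rt y x powr (- gam) * (w y * w x))"
        using s0 c3 assms(8) wab[of y x] m.commute[of x y]
        by (simp add: D_def ennreal_mult[symmetric])
      also have "\<dots> \<le> ennreal (s / c3) * G y x" by (intro mult_left_mono Glo[OF yx]) auto
      finally show ?thesis .
    qed
    have "ennreal (s / c3 * (1 / C * D powr (- gam) * (w y * w x))) \<le> ennreal (C * (D/2) powr (-gam) * w y * nS)"
      using order_trans[OF e0 order_trans[OF e1 order_trans[OF hyp1[of y] e2]]] e3 by simp
    then have ri: "s / c3 * (1 / C * D powr (- gam) * (w y * w x)) \<le> C * (D/2) powr (-gam) * w y * nS"
      using nS0 wpos[of y] assms(8) by (subst (asm) ennreal_le_iff) auto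
    have D2: "(D/2) powr (-gam) = D powr (-gam) * 2 powr gam"
      unfolding powr_divide powr_minus by (simp add: field_simps)
    have nSlow: "s * lam / (c3 * C^2 * 2 powr gam) \<le> nS"
      by (rule real_aux1[OF ri[unfolded D2]]) (use Dpos wpos s0 c3 assms(8) lam x in auto)
    have mnB: "\<And>v. mnorm (eps mu B v) \<le> ennreal (w v / lam)"
    proof -
      fix v :: 'a
      define N where "N = mu (- B) v"
      have oB: "open (- B)" using clB by auto
      have Nfb: "fin_borel N" and NB: "emeasure N (- B) = 0" using muprops[OF oB, of v] by (auto simp: N_def)
      have sets_N: "sets N = sets borel" and finN: "finite_measure N" using Nfb by (auto simp: fin_borel_def)
      have AEN: "AE z in N. z \<in> B"
        by (rule AE_I[of _ _ "- B"]) (use NB clB sets_N in \<open>auto\<close>)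
      define m where "m = measure N (space N)"
      have m_eq: "emeasure N (space N) = ennreal m"
        using finN by (simp add: finite_measure.emeasure_eq_measure m_def)
      have "ennreal (lam * m) = (\<integral>\<^sup>+ z. ennreal lam \<partial>N)"
        using m_eq lam(1) by (simp add: nn_integral_const ennreal_mult m_def)
      also have "\<dots> \<le> (\<integral>\<^sup>+ z. ennreal (w z) \<partial>N)"
        using AEN by (rule nn_integral_mono_AE[OF AE_mp]) (use BX0 lam(2) in \<open>auto intro!: ennreal_leI\<close>)
      also have "\<dots> \<le> ennreal (w v)" unfolding N_def by (rule superm[OF oB])
      finally have "lam * m \<le> w v" using wpos[of v] by (subst (asm) ennreal_le_iff) auto
      then have "m \<le> w v / lam" using lam(1) by (simp add: field_simps)
      then show "mnorm (eps mu B v) \<le> ennreal (w v / lam)"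
        unfolding mnorm_def eps_def N_def[symmetric] m_eq by (rule ennreal_leI)
    qed
    define K where "K = c1 / lam"
    have K0: "0 < K" using c1 lam(1) by (simp add: K_def)
    define f where "f = (\<lambda>z. ennreal (w z / K))"
    define M where "M = density \<nu> f"
    have fmeas_b: "f \<in> borel_measurable borel" unfolding f_def using wmeas by measurable
    have fmeas: "f \<in> borel_measurable \<nu>" unfolding bm_nu by (rule fmeas_b)
    have sets_M: "sets M = sets borel" by (simp add: M_def sets_nu)
    have space_M: "space M = UNIV" using sets_eq_imp_space_eq[OF sets_M] by simp
    have Mspace: "emeasure M (space M) = (\<integral>\<^sup>+ z. f z \<partial>\<nu>)"
      unfolding M_def space_density by (subst emeasure_density[OF fmeas]) auto
    have fle: "(\<integral>\<^sup>+ z. f z \<partial>\<nu>) \<le> (\<integral>\<^sup>+ z. ennreal (1 / K) \<partial>\<nu>)"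
      using wle1 K0 by (intro nn_integral_mono) (auto simp: f_def intro!: ennreal_leI divide_right_mono)
    also have "\<dots> = ennreal (1 / K) * ennreal nS" by (simp add: nn_integral_const nS_eq)
    also have "\<dots> = ennreal (1 / K * nS)" using K0 nS0 by (simp add: ennreal_mult'' del: times_divide_eq_left)
    finally have "emeasure M (space M) \<le> ennreal (1 / K * nS)" using Mspace by simp
    then have finM: "emeasure M (space M) \<noteq> \<infinity>" by (auto simp: top_unique)
    have finbM: "fin_borel M" unfolding fin_borel_def using sets_M finM by (auto intro: finite_measureI)
    have nullM: "emeasure (completion M) (- Ut rt x r) = 0"
    proof -
      have mem: "- Ut rt x r \<in> sets M" using sets_M Ut_open[of x r] by auto
      have "emeasure M (- Ut rt x r) = (\<integral>\<^sup>+ z. f z * indicator (- Ut rt x r) z \<partial>\<nu>)"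
        unfolding M_def by (rule emeasure_density[OF fmeas]) (use mem sets_M sets_nu in simp)
      also have "\<dots> = (\<integral>\<^sup>+ z. 0 \<partial>\<nu>)"
      proof (rule nn_integral_cong_AE)
        show "AE z in \<nu>. f z * indicator (- Ut rt x r) z = 0"
          using AEB
        proof eventually_elim
          fix z assume "z \<in> B"
          then have "z \<in> Ut rt x r" using BU r0 by (auto simp: U_def Ut_def)
          then show "f z * indicator (- Ut rt x r) z = 0" by simp
        qed
      qed
      finally have "- Ut rt x r \<in> null_sets M" using mem by (simp add: null_sets_def)
      then have "- Ut rt x r \<in> null_sets (completion M)" by (rule null_sets_completionI)
      then show ?thesis by (rule null_setsD1)
    qed
    have pot: "\<forall>v. (\<integral>\<^sup>+ z. Gt G w v z \<partial>M) \<le> 1"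
    proof
      fix v :: 'a
      have Gtb: "(\<lambda>z. G v z * ennreal (1 / (w v * w z))) \<in> borel_measurable borel"
        using Gmeas[of v] wmeas by measurable
      have Gtmeas: "(\<lambda>z. Gt G w v z) \<in> borel_measurable \<nu>"
        unfolding bm_nu Gt_eq' by (rule Gtb)
      have Gvm: "(\<lambda>z. G v z) \<in> borel_measurable \<nu>" unfolding bm_nu by (rule Gmeas)
      have "(\<integral>\<^sup>+ z. Gt G w v z \<partial>M) = (\<integral>\<^sup>+ z. f z * Gt G w v z \<partial>\<nu>)"
        unfolding M_def by (rule nn_integral_density[OF fmeas Gtmeas])
      also have "\<dots> = (\<integral>\<^sup>+ z. ennreal (1 / (K * w v)) * G v z \<partial>\<nu>)"
      proof (rule nn_integral_cong)
        fix z
        have "f z * ennreal (1 / (w v * w z)) = ennreal (w z / K * (1 / (w v * w z)))"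
          unfolding f_def using wpos[of z] K0 wab[of v z] by (simp add: ennreal_mult[symmetric])
        also have "w z / K * (1 / (w v * w z)) = 1 / (K * w v)"
          using wpos[of z] wpos[of v] K0 by (simp add: field_simps)
        finally have eq: "f z * ennreal (1 / (w v * w z)) = ennreal (1 / (K * w v))" .
        show "f z * Gt G w v z = ennreal (1 / (K * w v)) * G v z"
          unfolding Gt_eq' using eq by (metis mult.assoc mult.commute)
      qed
      also have "\<dots> = ennreal (1 / (K * w v)) * Gpot G \<nu> v"
        unfolding Gpot_def by (rule nn_integral_cmult[OF Gvm])
      also have "\<dots> \<le> ennreal (1 / (K * w v)) * (ennreal c1 * ennreal (w v / lam))"
        using order_trans[OF hyp2[of v] mult_left_mono[OF mnB[of v]]] by (intro mult_left_mono) auto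
      also have "\<dots> = ennreal (1 / (K * w v) * (c1 * (w v / lam)))"
        using K0 wpos[of v] c1 lam(1) by (simp add: ennreal_mult[symmetric])
      also have "1 / (K * w v) * (c1 * (w v / lam)) = 1"
        using K0 wpos[of v] c1 lam(1) by (simp add: K_def field_simps)
      finally show "(\<integral>\<^sup>+ z. Gt G w v z \<partial>M) \<le> 1" by simp
    qed
    have massM: "ennreal (lam / K * nS) \<le> mnorm M"
    proof -
      have "ennreal (lam / K * nS) = (\<integral>\<^sup>+ z. ennreal (lam / K) \<partial>\<nu>)"
        using nS_eq nS0 lam(1) K0 by (simp add: nn_integral_const ennreal_mult'' del: times_divide_eq_left)
      also have "\<dots> \<le> (\<integral>\<^sup>+ z. f z \<partial>\<nu>)"
        using AEB by (rule nn_integral_mono_AE[OF AE_mp])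
          (use BX0 lam(2) K0 in \<open>auto simp: f_def intro!: AE_I2 ennreal_leI divide_right_mono\<close>)
      also have "\<dots> = mnorm M" unfolding mnorm_def using Mspace by simp
      finally show ?thesis .
    qed
    have capM: "mnorm M \<le> capt G w (Ut rt x r)"
      unfolding capt_def by (rule Sup_upper) (use finbM nullM pot in blast)
    have fr: "r powr gam / c2 \<le> lam / K * nS"
    proof -
      have rr: "(r/8) powr gam = r powr gam / 8 powr gam" by (rule powr_divide)
      have e16: "8 powr gam * 2 powr gam = 16 powr gam" using powr_mult[of 8 2 gam] by simp
      have nS': "r powr gam / (8 powr gam * C) * lam / (c3 * C^2 * 2 powr gam) \<le> nS"
        using nSlow rr by (simp add: s_def field_simps)
      show ?thesis unfolding K_def
        by (rule real_aux2[OF nS']) (use r0 c1 c3 assms(8) lam(1) e16 in \<open>auto simp: c2_def\<close>)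
    qed
    show "ennreal (r powr gam / c2) \<le> capt G w (Ut rt x r)"
      using order_trans[OF ennreal_leI[OF fr] order_trans[OF massM capM]] .

  qed
qed

end
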